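(* Let $N$ be a Poisson process on $[0,\infty)$ with intensity $\lambda>0$, with points $0<X_1<X_2<\cdots$, and let $\epsilon>0$, $L>0$. For every integer $n\ge0$, $$\Pr(\beta_0(L)=n)=\frac{1}{n!}\sum_{i=0}^{\lfloor L/\epsilon\rfloor-n}\frac{(-1)^i}{i!}\Big(\big(L-(n+i)\epsilon\big)\lambda e^{-\lambda\epsilon}\Big)^{n+i},$$ where an empty sum is $0$.
   Context: A cluster is a maximal set of consecutive points $X_j,\dots,X_k$ with $X_{l+1}-X_l\le\epsilon$ for $j\le l<k$; its end is $X_k+\epsilon$. $\beta_0(L)$ is the number of clusters whose end is $\le L$ (number of complete clusters, i.e. connected components, in $[0,L]$). *)

theory Defs
  imports "HOL-Probability.Probability"
begin

text \<open>Points of the process are given as a sequence X :: nat => real, where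
  X 0 is the first point X_1 of the paper, X 1 the second point, etc.
  Poisson process on [0,inf) of intensity lam: points are partial sums of
  i.i.d. Exp(lam) interarrival times T 0, T 1, ...\<close>

definition poisson_points :: "(nat \<Rightarrow> 'a \<Rightarrow> real) \<Rightarrow> 'a \<Rightarrow> nat \<Rightarrow> real" where
  "poisson_points T \<omega> k = (\<Sum>i\<le>k. T i \<omega>)"

definition is_cluster :: "real \<Rightarrow> (nat \<Rightarrow> real) \<Rightarrow> nat \<Rightarrow> nat \<Rightarrow> bool" where
  "is_cluster eps X j k \<longleftrightarrow> j \<le> k
     \<and> (\<forall>l. j \<le> l \<and> l < k \<longrightarrow> X (Suc l) - X l \<le> eps)
     \<and> (j = 0 \<or> X j - X (j - 1) > eps)
     \<and> X (Suc k) - X k > eps"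

text \<open>The end of cluster (j,k) is X k + eps; beta0 counts clusters whose end is <= L.\<close>
definition beta0 :: "real \<Rightarrow> (nat \<Rightarrow> real) \<Rightarrow> real \<Rightarrow> nat" where
  "beta0 eps X L = card {(j, k). is_cluster eps X j k \<and> X k + eps \<le> L}"

end

theory Submission
  imports Defs
begin


lemma cluster_unique:
  assumes "is_cluster eps X j k" "is_cluster eps X j' k"
  shows "j = j'"
proof (rule ccontr)
  assume ne: "j \<noteq> j'"
  { fix j j' assume c1: "is_cluster eps X j k" and c2: "is_cluster eps X j' k" and lt: "j < j'"
    from c2 lt have g: "X j' - X (j' - 1) > eps" unfolding is_cluster_def by auto
    have jk: "j' \<le> k" using c2 unfolding is_cluster_def by auto
    have h: "\<forall>l. j \<le> l \<and> l < k \<longrightarrow> X (Suc l) - X l \<le> eps" using c1 unfolding is_cluster_def by auto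
    have "j \<le> j' - 1 \<and> j' - 1 < k" using lt jk by auto
    with h have "X (Suc (j'-1)) - X (j'-1) \<le> eps" by blast
    moreover have "Suc (j'-1) = j'" using lt by simp
    ultimately have False using g by simp }
  with assms ne show False by (metis linorder_neqE_nat)
qed

lemma card_clusters:
  "card {(j, k). is_cluster eps X j k \<and> X k + eps \<le> L} = card {k. X (Suc k) - X k > eps \<and> X k + eps \<le> L}"
proof (rule bij_betw_same_card[of snd])
  show "bij_betw snd {(j, k). is_cluster eps X j k \<and> X k + eps \<le> L} {k. X (Suc k) - X k > eps \<and> X k + eps \<le> L}"
  proof (rule bij_betwI')
    fix x y assume "x \<in> {(j, k). is_cluster eps X j k \<and> X k + eps \<le> L}" "y \<in> {(j, k). is_cluster eps X j k \<and> X k + eps \<le> L}"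
    then show "(snd x = snd y) = (x = y)" using cluster_unique by (cases x; cases y) auto
  next
    fix x assume "x \<in> {(j, k). is_cluster eps X j k \<and> X k + eps \<le> L}"
    then show "snd x \<in> {k. X (Suc k) - X k > eps \<and> X k + eps \<le> L}" unfolding is_cluster_def by auto
  next
    fix k assume k: "k \<in> {k. X (Suc k) - X k > eps \<and> X k + eps \<le> L}"
    define G where "G = {j. j \<le> k \<and> (j = 0 \<or> X j - X (j - 1) > eps)}"
    have fin: "finite G" unfolding G_def by auto
    have "0 \<in> G" unfolding G_def by auto
    define j where "j = Max G"
    have jG: "j \<in> G" unfolding j_def using fin \<open>0 \<in> G\<close> by (intro Max_in) auto
    have jmax: "\<And>i. i \<in> G \<Longrightarrow> i \<le> j" unfolding j_def using fin by auto
    have "is_cluster eps X j k" unfolding is_cluster_def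
    proof (intro conjI allI impI)
      show "j \<le> k" using jG G_def by auto
      show "j = 0 \<or> eps < X j - X (j - 1)" using jG G_def by auto
      show "eps < X (Suc k) - X k" using k by auto
      fix l assume l: "j \<le> l \<and> l < k"
      show "X (Suc l) - X l \<le> eps"
      proof (rule ccontr)
        assume "\<not> ?thesis"
        then have "Suc l \<in> G" using l unfolding G_def by auto
        then show False using jmax l by fastforce
      qed
    qed
    then show "\<exists>x\<in>{(j, k). is_cluster eps X j k \<and> X k + eps \<le> L}. k = snd x" using k by auto
  qed
qed


lemma exp_shift:
  fixes lam eps :: real and g :: "real \<Rightarrow> ennreal"
  assumes lam: "lam > 0" and eps: "eps \<ge> 0" and g[measurable]: "g \<in> borel_measurable borel"
  shows "(\<integral>\<^sup>+y. indicator {eps<..} y * g y \<partial>density lborel (exponential_density lam))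
    = ennreal (exp (-lam*eps)) * (\<integral>\<^sup>+y. g (y + eps) \<partial>density lborel (exponential_density lam))"
proof -
  have ed: "exponential_density lam \<in> borel_measurable borel" by simp
  have "(\<integral>\<^sup>+y. indicator {eps<..} y * g y \<partial>density lborel (exponential_density lam))
     = (\<integral>\<^sup>+y. ennreal (exponential_density lam y) * (indicator {eps<..} y * g y) \<partial>lborel)"
    by (subst nn_integral_density) (auto simp: exponential_density_nonneg lam)
  also have "\<dots> = (\<integral>\<^sup>+t. ennreal (exponential_density lam (eps + 1 * t)) * (indicator {eps<..} (eps + 1 * t) * g (eps + 1 * t)) \<partial>lborel)"
    by (subst nn_integral_real_affine[where c=1 and t=eps]) auto
  also have "\<dots> = (\<integral>\<^sup>+t. ennreal (exp (-lam*eps)) * (ennreal (exponential_density lam t) * g (t + eps)) \<partial>lborel)"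
  proof (rule nn_integral_cong_AE)
    show "AE t in lborel. ennreal (exponential_density lam (eps + 1 * t)) * (indicator {eps<..} (eps + 1 * t) * g (eps + 1 * t))
        = ennreal (exp (-lam*eps)) * (ennreal (exponential_density lam t) * g (t + eps))"
      using AE_lborel_singleton[of 0]
    proof eventually_elim
      case (elim t)
      show ?case
      proof (cases "t > 0")
        case True
        have "exponential_density lam (eps + 1 * t) = exp (-lam*eps) * exponential_density lam t"
          using True eps by (simp add: exponential_density_def exp_add[symmetric] algebra_simps)
        then show ?thesis using True
          by (simp add: ennreal_mult' mult.assoc add.commute)
      next
        case False
        then have "t < 0" using elim by auto
        then show ?thesis by (simp add: exponential_density_def)
      qed
    qed
  qed
  also have "\<dots> = ennreal (exp (-lam*eps)) * (\<integral>\<^sup>+t. ennreal (exponential_density lam t) * g (t + eps) \<partial>lborel)"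
    by (rule nn_integral_cmult) auto
  also have "(\<integral>\<^sup>+t. ennreal (exponential_density lam t) * g (t + eps) \<partial>lborel) = (\<integral>\<^sup>+y. g (y + eps) \<partial>density lborel (exponential_density lam))"
    by (subst nn_integral_density) (auto simp: exponential_density_nonneg lam)
  finally show ?thesis .
qed



abbreviation EXP :: "real \<Rightarrow> real measure" where
  "EXP lam \<equiv> density lborel (exponential_density lam)"

lemma sets_EXP: "sets (EXP lam) = sets borel" by simp

lemma psf_EXP: "lam > 0 \<Longrightarrow> product_sigma_finite (\<lambda>_::nat. EXP lam)"
  unfolding product_sigma_finite_def
  using prob_space_exponential_density[of lam] prob_space_imp_sigma_finite by blast

lemma meas_comp:
  assumes "j \<in> A"
  shows "(\<lambda>x. x j) \<in> borel_measurable (PiM A (\<lambda>_::nat. EXP lam))"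
proof -
  have "(\<lambda>x. x j) \<in> measurable (PiM A (\<lambda>_::nat. EXP lam)) (EXP lam)"
    by (rule measurable_component_singleton) fact
  moreover have "measurable (PiM A (\<lambda>_::nat. EXP lam)) (EXP lam) = borel_measurable (PiM A (\<lambda>_::nat. EXP lam))"
    by (rule measurable_cong_sets) auto
  ultimately show ?thesis by simp
qed

lemma meas_sumB:
  assumes "B \<subseteq> A"
  shows "(\<lambda>x. \<Sum>j\<in>B. x j) \<in> borel_measurable (PiM A (\<lambda>_::nat. EXP lam))"
  using assms by (intro borel_measurable_sum meas_comp) auto

lemma meas_prodI:
  assumes "I \<subseteq> A"
  shows "(\<lambda>x. \<Prod>j\<in>I. indicator {eps<..} (x j) :: ennreal) \<in> borel_measurable (PiM A (\<lambda>_::nat. EXP lam))"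
proof (intro borel_measurable_prod_ennreal)
  fix j assume "j \<in> I"
  then have "j \<in> A" using assms by auto
  then have [measurable]: "(\<lambda>x. x j) \<in> borel_measurable (PiM A (\<lambda>_::nat. EXP lam))"
    by (rule meas_comp)
  show "(\<lambda>x. indicator {eps<..} (x j) :: ennreal) \<in> borel_measurable (PiM A (\<lambda>_::nat. EXP lam))"
    by measurable
qed

lemma meas_F:
  assumes "I \<subseteq> A" "B \<subseteq> A" and [measurable]: "h \<in> borel_measurable borel"
  shows "(\<lambda>x. (\<Prod>j\<in>I. indicator {eps<..} (x j) :: ennreal) * h ((\<Sum>j\<in>B. x j) + c)) \<in> borel_measurable (PiM A (\<lambda>_::nat. EXP lam))"
proof -
  note [measurable] = meas_prodI[OF assms(1)] meas_sumB[OF assms(2)]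
  show ?thesis by measurable
qed



lemma prod_shift:
  fixes lam eps :: real and A B I :: "nat set"
  assumes lam: "lam > 0" and eps: "eps \<ge> 0" and A: "finite A" and BA: "B \<subseteq> A" and IA: "I \<subseteq> A"
    and hm: "h \<in> borel_measurable borel"
  shows "(\<integral>\<^sup>+x. (\<Prod>j\<in>I. indicator {eps<..} (x j) :: ennreal) * h ((\<Sum>j\<in>B. x j) + c) \<partial>PiM A (\<lambda>_. EXP lam))
    = ennreal (exp (-lam*eps)) ^ card I * (\<integral>\<^sup>+x. h ((\<Sum>j\<in>B. x j) + c + eps * card (I \<inter> B)) \<partial>PiM A (\<lambda>_. EXP lam))"
proof -
  interpret product_sigma_finite "\<lambda>_::nat. EXP lam" using psf_EXP[OF lam] .
  have fI: "finite I" using IA A finite_subset by blast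
  show ?thesis using fI IA hm
  proof (induction I arbitrary: h c rule: finite_induct)
    case empty
    then show ?case by simp
  next
    case (insert i I)
    note hm[measurable] = insert.prems(2)
    have iA: "i \<in> A" and IA': "I \<subseteq> A" using insert.prems by auto
    define A' where "A' = A - {i}"
    have AA': "A = insert i A'" "i \<notin> A'" "finite A'" using iA A unfolding A'_def by auto
    define d where "d = (if i \<in> B then eps else 0)"
    have fB: "finite B" using BA A finite_subset by blast
    have sumupd: "(\<Sum>j\<in>B. (x(i := y + eps)) j) = (\<Sum>j\<in>B. (x(i := y)) j) + d" for x :: "nat \<Rightarrow> real" and y
    proof (cases "i \<in> B")
      case True
      have "(\<Sum>j\<in>B. (x(i := y + eps)) j) = (y + eps) + (\<Sum>j\<in>B - {i}. x j)"
        using True fB by (subst sum.remove[of B i]) auto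
      moreover have "(\<Sum>j\<in>B. (x(i := y)) j) = y + (\<Sum>j\<in>B - {i}. x j)"
        using True fB by (subst sum.remove[of B i]) auto
      ultimately show ?thesis using True unfolding d_def by simp
    next
      case False
      then have "(\<Sum>j\<in>B. (x(i := y + eps)) j) = (\<Sum>j\<in>B. (x(i := y)) j)"
        by (intro sum.cong) auto
      then show ?thesis using False unfolding d_def by simp
    qed
    have produpd: "(\<Prod>j\<in>I. indicator {eps<..} ((x(i:=y)) j) :: ennreal) = (\<Prod>j\<in>I. indicator {eps<..} (x j))" for x :: "nat \<Rightarrow> real" and y
      using insert.hyps(2) by (intro prod.cong) auto
    let ?P = "\<lambda>x::nat\<Rightarrow>real. (\<Prod>j\<in>I. indicator {eps<..} (x j) :: ennreal)"
    have mF: "(\<lambda>x. (\<Prod>j\<in>insert i I. indicator {eps<..} (x j) :: ennreal) * h ((\<Sum>j\<in>B. x j) + c)) \<in> borel_measurable (PiM (insert i A') (\<lambda>_. EXP lam))"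
      using meas_F[where I="insert i I" and A=A and B=B and h=h and c=c and eps=eps and lam=lam] insert.prems BA AA'(1) by simp
    have mG: "(\<lambda>x. ?P x * h ((\<Sum>j\<in>B. x j) + (c + d))) \<in> borel_measurable (PiM (insert i A') (\<lambda>_. EXP lam))"
      using meas_F[where I="I" and A=A and B=B and h=h and c="c+d" and eps=eps and lam=lam] IA' BA AA'(1) by simp
    have step1: "(\<integral>\<^sup>+x. (\<Prod>j\<in>insert i I. indicator {eps<..} (x j) :: ennreal) * h ((\<Sum>j\<in>B. x j) + c) \<partial>PiM A (\<lambda>_. EXP lam))
      = (\<integral>\<^sup>+x. (\<integral>\<^sup>+y. (\<Prod>j\<in>insert i I. indicator {eps<..} ((x(i:=y)) j) :: ennreal) * h ((\<Sum>j\<in>B. (x(i:=y)) j) + c) \<partial>EXP lam) \<partial>PiM A' (\<lambda>_. EXP lam))"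
      unfolding AA'(1) by (rule product_nn_integral_insert[OF AA'(3) AA'(2) mF])
    have step3: "(\<integral>\<^sup>+x. ?P x * h ((\<Sum>j\<in>B. x j) + (c + d)) \<partial>PiM A (\<lambda>_. EXP lam)) = 
        (\<integral>\<^sup>+x. (\<integral>\<^sup>+y. ?P (x(i:=y)) * h ((\<Sum>j\<in>B. (x(i:=y)) j) + (c + d)) \<partial>EXP lam) \<partial>PiM A' (\<lambda>_. EXP lam))"
      unfolding AA'(1) by (rule product_nn_integral_insert[OF AA'(3) AA'(2) mG])
    have m1: "(\<lambda>y. ?P x * h ((\<Sum>j\<in>B. (x(i:=y)) j) + c')) \<in> borel_measurable borel"
      if x: "x \<in> space (PiM A' (\<lambda>_. EXP lam))" for x c'
    proof -
      have "(\<lambda>y. (x(i:=y))) \<in> measurable (EXP lam) (PiM (insert i A') (\<lambda>_. EXP lam))"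
        using measurable_component_update[OF x AA'(2)] .
      moreover have "measurable (EXP lam) (PiM (insert i A') (\<lambda>_. EXP lam)) = measurable borel (PiM (insert i A') (\<lambda>_. EXP lam))"
        by (rule measurable_cong_sets) auto
      ultimately have u: "(\<lambda>y. (x(i:=y))) \<in> measurable borel (PiM (insert i A') (\<lambda>_. EXP lam))"
        by simp
      have sB[measurable]: "(\<lambda>x. \<Sum>j\<in>B. x j) \<in> borel_measurable (PiM (insert i A') (\<lambda>_. EXP lam))"
        using meas_sumB[of B "insert i A'" lam] BA AA'(1) by simp
      have "(\<lambda>z. ?P x * h ((\<Sum>j\<in>B. z j) + c')) \<in> borel_measurable (PiM (insert i A') (\<lambda>_. EXP lam))"
        by measurable
      from measurable_comp[OF u this] show ?thesis by (simp add: comp_def)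
    qed
    define e where "e = ennreal (exp (-lam*eps))"
    have step2: "(\<integral>\<^sup>+y. (\<Prod>j\<in>insert i I. indicator {eps<..} ((x(i:=y)) j) :: ennreal) * h ((\<Sum>j\<in>B. (x(i:=y)) j) + c) \<partial>EXP lam)
        = (\<integral>\<^sup>+y. e * (?P (x(i:=y)) * h ((\<Sum>j\<in>B. (x(i:=y)) j) + (c + d))) \<partial>EXP lam)"
      if x: "x \<in> space (PiM A' (\<lambda>_. EXP lam))" for x
    proof -
      have "(\<integral>\<^sup>+y. (\<Prod>j\<in>insert i I. indicator {eps<..} ((x(i:=y)) j) :: ennreal) * h ((\<Sum>j\<in>B. (x(i:=y)) j) + c) \<partial>EXP lam)
        = (\<integral>\<^sup>+y. indicator {eps<..} y * (?P x * h ((\<Sum>j\<in>B. (x(i:=y)) j) + c)) \<partial>EXP lam)"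
      proof (rule nn_integral_cong)
        fix y
        have "(\<Prod>j\<in>insert i I. indicator {eps<..} ((x(i:=y)) j) :: ennreal) = indicator {eps<..} ((x(i:=y)) i) * (\<Prod>j\<in>I. indicator {eps<..} ((x(i:=y)) j))"
          by (rule prod.insert[OF insert.hyps(1,2)])
        also have "\<dots> = indicator {eps<..} y * ?P x" by (simp only: produpd) simp
        finally show "(\<Prod>j\<in>insert i I. indicator {eps<..} ((x(i:=y)) j) :: ennreal) * h ((\<Sum>j\<in>B. (x(i:=y)) j) + c) = indicator {eps<..} y * (?P x * h ((\<Sum>j\<in>B. (x(i:=y)) j) + c))"
          by (simp only: mult.assoc)
      qed
      also have "\<dots> = e * (\<integral>\<^sup>+y. ?P x * h ((\<Sum>j\<in>B. (x(i:=y+eps)) j) + c) \<partial>EXP lam)"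
        unfolding e_def by (rule exp_shift[OF lam eps m1[OF x]])
      also have "(\<integral>\<^sup>+y. ?P x * h ((\<Sum>j\<in>B. (x(i:=y+eps)) j) + c) \<partial>EXP lam)
          = (\<integral>\<^sup>+y. ?P (x(i:=y)) * h ((\<Sum>j\<in>B. (x(i:=y)) j) + (c + d)) \<partial>EXP lam)"
      proof (rule nn_integral_cong)
        fix y
        have "(\<Sum>j\<in>B. (x(i:=y+eps)) j) + c = (\<Sum>j\<in>B. (x(i:=y)) j) + (c + d)"
          using sumupd[of x y] by simp
        then show "?P x * h ((\<Sum>j\<in>B. (x(i:=y+eps)) j) + c) = ?P (x(i:=y)) * h ((\<Sum>j\<in>B. (x(i:=y)) j) + (c + d))"
          using produpd[of x y] by (simp add: add_ac)
      qed
      also have "e * \<dots> = (\<integral>\<^sup>+y. e * (?P (x(i:=y)) * h ((\<Sum>j\<in>B. (x(i:=y)) j) + (c + d))) \<partial>EXP lam)"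
      proof -
        have "(\<lambda>y. ?P (x(i:=y)) * h ((\<Sum>j\<in>B. (x(i:=y)) j) + (c + d))) = (\<lambda>y. ?P x * h ((\<Sum>j\<in>B. (x(i:=y)) j) + (c + d)))"
          using produpd by simp
        moreover have "(\<lambda>y. ?P x * h ((\<Sum>j\<in>B. (x(i:=y)) j) + (c + d))) \<in> borel_measurable (EXP lam)"
          using m1[OF x, of "c+d"] by (simp cong: measurable_cong_sets)
        ultimately show ?thesis by (simp add: nn_integral_cmult)
      qed
      finally show ?thesis .
    qed
    have mG': "(\<lambda>x. e * (?P x * h ((\<Sum>j\<in>B. x j) + (c + d)))) \<in> borel_measurable (PiM (insert i A') (\<lambda>_. EXP lam))"
      using mG by measurable
    have mGA: "(\<lambda>x. ?P x * h ((\<Sum>j\<in>B. x j) + (c + d))) \<in> borel_measurable (PiM A (\<lambda>_. EXP lam))"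
      using mG AA'(1) by simp
    have "(\<integral>\<^sup>+x. (\<Prod>j\<in>insert i I. indicator {eps<..} (x j) :: ennreal) * h ((\<Sum>j\<in>B. x j) + c) \<partial>PiM A (\<lambda>_. EXP lam))
      = (\<integral>\<^sup>+x. (\<integral>\<^sup>+y. e * (?P (x(i:=y)) * h ((\<Sum>j\<in>B. (x(i:=y)) j) + (c + d))) \<partial>EXP lam) \<partial>PiM A' (\<lambda>_. EXP lam))"
      unfolding step1 by (intro nn_integral_cong step2)
    also have "\<dots> = (\<integral>\<^sup>+x. e * (?P x * h ((\<Sum>j\<in>B. x j) + (c + d))) \<partial>PiM A (\<lambda>_. EXP lam))"
      unfolding AA'(1) by (rule product_nn_integral_insert[OF AA'(3) AA'(2) mG', symmetric])
    also have "\<dots> = e * (\<integral>\<^sup>+x. ?P x * h ((\<Sum>j\<in>B. x j) + (c + d)) \<partial>PiM A (\<lambda>_. EXP lam))"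
      by (rule nn_integral_cmult[OF mGA])
    also have "(\<integral>\<^sup>+x. ?P x * h ((\<Sum>j\<in>B. x j) + (c + d)) \<partial>PiM A (\<lambda>_. EXP lam))
       = ennreal (exp (-lam*eps)) ^ card I * (\<integral>\<^sup>+x. h ((\<Sum>j\<in>B. x j) + (c + d) + eps * card (I \<inter> B)) \<partial>PiM A (\<lambda>_. EXP lam))"
      by (rule insert.IH[OF IA' hm])
    also have "(\<integral>\<^sup>+x. h ((\<Sum>j\<in>B. x j) + (c + d) + eps * card (I \<inter> B)) \<partial>PiM A (\<lambda>_. EXP lam))
       = (\<integral>\<^sup>+x. h ((\<Sum>j\<in>B. x j) + c + eps * card (insert i I \<inter> B)) \<partial>PiM A (\<lambda>_. EXP lam))"
    proof -
      have "real (card (insert i I \<inter> B)) = real (card (I \<inter> B)) + (if i \<in> B then 1 else 0)"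
        using insert.hyps(1,2) by (simp add: Int_insert_left)
      then have "(c + d) + eps * card (I \<inter> B) = c + eps * card (insert i I \<inter> B)"
        unfolding d_def by (auto simp: algebra_simps)
      then show ?thesis by (simp add: add.assoc)
    qed
    finally show ?case using insert.hyps(1,2) unfolding e_def by (simp add: mult.assoc)
  qed
qed



locale pp = prob_space M for M :: "'a measure" +
  fixes T :: "nat \<Rightarrow> 'a \<Rightarrow> real" and lam eps L :: real
  assumes indep: "indep_vars (\<lambda>_. borel) T UNIV"
    and dist: "\<And>i. distributed M lborel (T i) (exponential_density lam)"
    and lam: "lam > 0" and eps: "eps > 0" and Lpos: "L > 0"
begin

lemma rv[measurable]: "T i \<in> borel_measurable M"
  using distributed_measurable[OF dist[of i]] by simp

lemma distr_T: "distr M borel (T i) = EXP lam"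
proof (rule measure_eqI)
  show "sets (distr M borel (T i)) = sets (EXP lam)" by simp
  fix A assume "A \<in> sets (distr M borel (T i))"
  then have A: "A \<in> sets borel" by simp
  have "emeasure (distr M borel (T i)) A = emeasure (distr M lborel (T i)) A"
    using A by (simp add: emeasure_distr)
  also have "\<dots> = emeasure (EXP lam) A"
    by (simp add: distributed_distr_eq_density[OF dist[of i]])
  finally show "emeasure (distr M borel (T i)) A = emeasure (EXP lam) A" .
qed

lemma law_T:
  assumes "A \<noteq> {}"
  shows "distr M (PiM A (\<lambda>_. borel)) (\<lambda>\<omega>. \<lambda>i\<in>A. T i \<omega>) = PiM A (\<lambda>_. EXP lam)"
proof -
  have "indep_vars (\<lambda>_. borel) T A" using indep_vars_subset[OF indep] by auto
  then have "distr M (PiM A (\<lambda>_. borel)) (\<lambda>\<omega>. \<lambda>i\<in>A. T i \<omega>) = PiM A (\<lambda>i. distr M borel (T i))"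
    using indep_vars_iff_distr_eq_PiM[where M'="\<lambda>_. borel" and X=T, OF assms] by simp
  also have "\<dots> = PiM A (\<lambda>_. EXP lam)" by (intro PiM_cong) (auto simp: distr_T)
  finally show ?thesis .
qed

lemma nn_integral_law:
  assumes "A \<noteq> {}" and F: "F \<in> borel_measurable (PiM A (\<lambda>_. EXP lam))"
  shows "(\<integral>\<^sup>+\<omega>. F (\<lambda>i\<in>A. T i \<omega>) \<partial>M) = (\<integral>\<^sup>+x. F x \<partial>PiM A (\<lambda>_. EXP lam))"
proof -
  have sPi: "sets (PiM A (\<lambda>_. EXP lam)) = sets (PiM A (\<lambda>_. borel))"
    by (intro sets_PiM_cong) auto
  have F': "F \<in> borel_measurable (PiM A (\<lambda>_. borel))"
    using F by (simp add: measurable_cong_sets[OF sPi refl])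
  have m: "(\<lambda>\<omega>. \<lambda>i\<in>A. T i \<omega>) \<in> measurable M (PiM A (\<lambda>_. borel))"
    by measurable
  have "(\<integral>\<^sup>+x. F x \<partial>PiM A (\<lambda>_. EXP lam)) = (\<integral>\<^sup>+x. F x \<partial>distr M (PiM A (\<lambda>_. borel)) (\<lambda>\<omega>. \<lambda>i\<in>A. T i \<omega>))"
    by (simp add: law_T[OF assms(1)])
  also have "\<dots> = (\<integral>\<^sup>+\<omega>. F (\<lambda>i\<in>A. T i \<omega>) \<partial>M)"
    by (rule nn_integral_distr[OF m]) (simp add: law_T[OF assms(1)] F)
  finally show ?thesis ..
qed

definition S :: "nat \<Rightarrow> 'a \<Rightarrow> real" where "S K \<omega> = (\<Sum>i\<le>K. T i \<omega>)"

lemma S_meas[measurable]: "S K \<in> borel_measurable M" unfolding S_def by measurable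

lemma P_S_le: "emeasure M {\<omega>\<in>space M. S K \<omega> \<le> c} = ennreal (erlang_CDF K lam c)"
proof -
  have d: "distributed M lborel (S K) (erlang_density K lam)"
    using exponential_distributed_sum[of "{..K}" lam T] dist indep_vars_subset[OF indep] lam
    unfolding S_def[abs_def] by auto
  have "{\<omega>\<in>space M. S K \<omega> \<le> c} = S K -` {..c} \<inter> space M" by auto
  then have "emeasure M {\<omega>\<in>space M. S K \<omega> \<le> c} = (\<integral>\<^sup>+x. ennreal (erlang_density K lam x) * indicator {..c} x \<partial>lborel)"
    using distributed_emeasure[OF d, of "{..c}"] by simp
  also have "\<dots> = ennreal (erlang_CDF K lam c)" by (rule nn_integral_erlang_density[OF lam])
  finally show ?thesis .
qed

lemma prod_ind: "finite I \<Longrightarrow> (\<Prod>j\<in>I. indicator X (f j) :: ennreal) = (if \<forall>j\<in>I. f j \<in> X then 1 else 0)"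
  by (induction I rule: finite_induct) auto

lemma P_event:
  assumes J: "J \<subseteq> {..<K}"
  shows "emeasure M {\<omega>\<in>space M. S K \<omega> \<le> c \<and> eps < T (Suc K) \<omega> \<and> (\<forall>j\<in>J. eps < T (Suc j) \<omega>)}
    = ennreal (exp (-lam*eps)) ^ Suc (card J) * ennreal (erlang_CDF K lam (c - eps * card J))"
proof -
  define A where "A = {..Suc K}"
  define I where "I = insert (Suc K) (Suc ` J)"
  define B where "B = {..K}"
  define h :: "real \<Rightarrow> ennreal" where "h = indicator {..c}"
  have hm[measurable]: "h \<in> borel_measurable borel" unfolding h_def by simp
  have fJ: "finite J" using J finite_subset by blast
  have IA: "I \<subseteq> A" and BA: "B \<subseteq> A" using J unfolding I_def A_def B_def by auto
  have cI: "card I = Suc (card J)" unfolding I_def using J fJ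
    by (subst card_insert_disjoint) (auto simp: card_image)
  have IB: "I \<inter> B = Suc ` J" unfolding I_def B_def using J by auto
  have cIB: "card (I \<inter> B) = card J" unfolding IB by (simp add: card_image)
  have Ane: "A \<noteq> {}" unfolding A_def by auto
  have fA: "finite A" unfolding A_def by simp
  let ?ev = "{\<omega>\<in>space M. S K \<omega> \<le> c \<and> eps < T (Suc K) \<omega> \<and> (\<forall>j\<in>J. eps < T (Suc j) \<omega>)}"
  have evm: "?ev \<in> sets M"
    using fJ by measurable
  let ?F = "\<lambda>x. (\<Prod>j\<in>I. indicator {eps<..} (x j) :: ennreal) * h ((\<Sum>j\<in>B. x j) + 0)"
  have Fm: "?F \<in> borel_measurable (PiM A (\<lambda>_. EXP lam))"
    by (rule meas_F[OF IA BA hm])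
  have "emeasure M ?ev = (\<integral>\<^sup>+\<omega>. indicator ?ev \<omega> \<partial>M)"
    using evm by simp
  also have "\<dots> = (\<integral>\<^sup>+\<omega>. ?F (\<lambda>i\<in>A. T i \<omega>) \<partial>M)"
  proof (rule nn_integral_cong)
    fix \<omega> assume \<omega>: "\<omega> \<in> space M"
    have "(\<Prod>j\<in>I. indicator {eps<..} ((\<lambda>i\<in>A. T i \<omega>) j) :: ennreal) = (\<Prod>j\<in>I. indicator {eps<..} (T j \<omega>))"
      using IA by (intro prod.cong) auto
    also have "\<dots> = (if \<forall>j\<in>I. T j \<omega> \<in> {eps<..} then 1 else 0)"
      using fJ unfolding I_def by (intro prod_ind) auto
    finally have p: "(\<Prod>j\<in>I. indicator {eps<..} ((\<lambda>i\<in>A. T i \<omega>) j) :: ennreal) = (if \<forall>j\<in>I. T j \<omega> \<in> {eps<..} then 1 else 0)" .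
    have s: "(\<Sum>j\<in>B. (\<lambda>i\<in>A. T i \<omega>) j) = S K \<omega>"
      using BA unfolding S_def B_def by (intro sum.cong) auto
    have "?F (\<lambda>i\<in>A. T i \<omega>) = (if \<forall>j\<in>I. T j \<omega> \<in> {eps<..} then 1 else 0) * h (S K \<omega> + 0)"
      by (simp only: p s)
    then show "indicator ?ev \<omega> = ?F (\<lambda>i\<in>A. T i \<omega>)"
      using \<omega> unfolding h_def I_def by (auto simp: indicator_def)
  qed
  also have "\<dots> = (\<integral>\<^sup>+x. ?F x \<partial>PiM A (\<lambda>_. EXP lam))"
    by (rule nn_integral_law[OF Ane Fm])
  also have "\<dots> = ennreal (exp (-lam*eps)) ^ card I * (\<integral>\<^sup>+x. h ((\<Sum>j\<in>B. x j) + 0 + eps * card (I \<inter> B)) \<partial>PiM A (\<lambda>_. EXP lam))"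
    using eps by (intro prod_shift[OF lam _ fA BA IA hm]) auto
  also have "(\<integral>\<^sup>+x. h ((\<Sum>j\<in>B. x j) + 0 + eps * card (I \<inter> B)) \<partial>PiM A (\<lambda>_. EXP lam))
     = (\<integral>\<^sup>+\<omega>. h ((\<Sum>j\<in>B. (\<lambda>i\<in>A. T i \<omega>) j) + 0 + eps * card (I \<inter> B)) \<partial>M)"
  proof (rule nn_integral_law[OF Ane, symmetric])
    have [measurable]: "(\<lambda>x. \<Sum>j\<in>B. x j) \<in> borel_measurable (PiM A (\<lambda>_::nat. EXP lam))"
      by (rule meas_sumB[OF BA])
    show "(\<lambda>x. h ((\<Sum>j\<in>B. x j) + 0 + eps * card (I \<inter> B))) \<in> borel_measurable (PiM A (\<lambda>_. EXP lam))"
      by measurable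
  qed
  also have "\<dots> = (\<integral>\<^sup>+\<omega>. indicator {\<omega>\<in>space M. S K \<omega> \<le> c - eps * card J} \<omega> \<partial>M)"
  proof (rule nn_integral_cong)
    fix \<omega> assume \<omega>: "\<omega> \<in> space M"
    have s: "(\<Sum>j\<in>B. (\<lambda>i\<in>A. T i \<omega>) j) = S K \<omega>"
      using BA unfolding S_def B_def by (intro sum.cong) auto
    show "h ((\<Sum>j\<in>B. (\<lambda>i\<in>A. T i \<omega>) j) + 0 + eps * card (I \<inter> B)) = indicator {\<omega>\<in>space M. S K \<omega> \<le> c - eps * card J} \<omega>"
    proof -
      have "h ((\<Sum>j\<in>B. (\<lambda>i\<in>A. T i \<omega>) j) + 0 + eps * card (I \<inter> B)) = h (S K \<omega> + eps * card J)"
        by (simp only: s cIB) simp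
      then show ?thesis using \<omega> unfolding h_def by (auto simp: indicator_def algebra_simps)
    qed
  qed
  also have "\<dots> = emeasure M {\<omega>\<in>space M. S K \<omega> \<le> c - eps * card J}"
    by (intro nn_integral_indicator) measurable
  also have "\<dots> = ennreal (erlang_CDF K lam (c - eps * card J))" by (rule P_S_le)
  finally show ?thesis unfolding cI .
qed

end


lemma choose_series:
  fixes y :: real
  shows "(\<lambda>K. real (K choose r) * y ^ K / fact K) sums (y ^ r / fact r * exp y)"
proof -
  have "(\<lambda>j. y ^ r / fact r * (y ^ j /\<^sub>R fact j)) sums (y ^ r / fact r * exp y)"
    by (intro sums_mult exp_converges)
  moreover have "(\<lambda>j. y ^ r / fact r * (y ^ j /\<^sub>R fact j)) = (\<lambda>j. real ((j + r) choose r) * y ^ (j + r) / fact (j + r))"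
  proof
    fix j
    have "real ((j + r) choose r) = fact (j + r) / (fact r * fact j)"
      by (simp add: binomial_fact)
    then show "y ^ r / fact r * (y ^ j /\<^sub>R fact j) = real ((j + r) choose r) * y ^ (j + r) / fact (j + r)"
      by (simp add: power_add field_simps)
  qed
  ultimately have "(\<lambda>j. real ((j + r) choose r) * y ^ (j + r) / fact (j + r)) sums (y ^ r / fact r * exp y)" by simp
  then show ?thesis
    by (subst (asm) sums_zero_iff_shift[where f="\<lambda>K. real (K choose r) * y ^ K / fact K"]) auto
qed

lemma erlang_choose_sum:
  fixes lam c :: real
  assumes lam: "lam > 0"
  shows "(\<Sum>K. of_nat (K choose r) * ennreal (erlang_CDF K lam c))
       = ennreal (if c \<ge> 0 then (lam * c) ^ Suc r / fact (Suc r) else 0)"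
proof -
  have "(\<Sum>K. of_nat (K choose r) * ennreal (erlang_CDF K lam c))
      = (\<Sum>K. (\<integral>\<^sup>+x. of_nat (K choose r) * (ennreal (erlang_density K lam x) * indicator {..c} x) \<partial>lborel))"
    by (subst nn_integral_cmult) (auto simp: nn_integral_erlang_density[OF lam])
  also have "\<dots> = (\<integral>\<^sup>+x. (\<Sum>K. of_nat (K choose r) * (ennreal (erlang_density K lam x) * indicator {..c} x)) \<partial>lborel)"
    by (rule nn_integral_suminf[symmetric]) auto
  also have "\<dots> = (\<integral>\<^sup>+x. ennreal (lam ^ Suc r * x ^ r / fact r) * indicator {0..c} x \<partial>lborel)"
  proof (rule nn_integral_cong_AE)
    show "AE x in lborel. (\<Sum>K. of_nat (K choose r) * (ennreal (erlang_density K lam x) * indicator {..c} x)) = ennreal (lam ^ Suc r * x ^ r / fact r) * indicator {0..c} x"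
      using AE_lborel_singleton[of 0]
    proof eventually_elim
      case (elim x)
      show ?case
      proof (cases "0 < x \<and> x \<le> c")
        case True
        have s0: "(\<lambda>K. real (K choose r) * (lam * x) ^ K / fact K * (lam * exp (- lam * x))) sums
            ((lam * x) ^ r / fact r * exp (lam * x) * (lam * exp (- lam * x)))"
          by (intro sums_mult2 choose_series)
        have e1: "(\<lambda>K. real (K choose r) * (lam * x) ^ K / fact K * (lam * exp (- lam * x)))
           = (\<lambda>K. real (K choose r) * erlang_density K lam x)"
          using True by (auto simp: erlang_density_def power_mult_distrib fun_eq_iff field_simps)
        have e2: "(lam * x) ^ r / fact r * exp (lam * x) * (lam * exp (- lam * x)) = lam ^ Suc r * x ^ r / fact r"
          by (simp add: power_mult_distrib field_simps exp_minus)
        have s: "(\<lambda>K. real (K choose r) * erlang_density K lam x) sums (lam ^ Suc r * x ^ r / fact r)"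
          using s0 unfolding e1 e2 .
        have "(\<Sum>K. of_nat (K choose r) * (ennreal (erlang_density K lam x) * indicator {..c} x))
            = (\<Sum>K. ennreal (real (K choose r) * erlang_density K lam x))"
          using True lam by (intro suminf_cong) (simp add: ennreal_mult' ennreal_of_nat_eq_real_of_nat)
        also have "\<dots> = ennreal (lam ^ Suc r * x ^ r / fact r)"
          using lam s by (intro suminf_ennreal_eq) auto
        finally show ?thesis using True by simp
      next
        case False
        then have "x < 0 \<or> c < x" using elim by auto
        then show ?thesis by (auto simp: erlang_density_def)
      qed
    qed
  qed
  also have "\<dots> = ennreal (if c \<ge> 0 then (lam * c) ^ Suc r / fact (Suc r) else 0)"
  proof (cases "c \<ge> 0")
    case True
    have "(\<integral>\<^sup>+x. ennreal (lam ^ Suc r * x ^ r / fact r) * indicator {0..c} x \<partial>lborel)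
       = (lam * c) ^ Suc r / fact (Suc r) - (lam * 0) ^ Suc r / fact (Suc r)"
    proof (rule nn_integral_FTC_Icc[where F="\<lambda>x. (lam * x) ^ Suc r / fact (Suc r)"])
      show "(\<lambda>x. lam ^ Suc r * x ^ r / fact r) \<in> borel_measurable borel" by measurable
      fix x :: real assume "x \<in> {0..c}"
      then show "0 \<le> lam ^ Suc r * x ^ r / fact r" using lam by auto
      show "((\<lambda>x. (lam * x) ^ Suc r / fact (Suc r)) has_real_derivative lam ^ Suc r * x ^ r / fact r) (at x)"
      proof -
        have d: "((\<lambda>x. (lam * x) ^ Suc r / fact (Suc r)) has_real_derivative (real (Suc r) * (lam * (lam * x) ^ (Suc r - Suc 0)) / fact (Suc r))) (at x)"
          by (rule DERIV_cdivide DERIV_power DERIV_cmult_Id)+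
        have e: "real (Suc r) * (lam * (lam * x) ^ (Suc r - Suc 0)) / fact (Suc r) = lam ^ Suc r * x ^ r / fact r"
        proof -
          have f: "(fact (Suc r)::real) = real (Suc r) * fact r" by (simp only: fact_Suc of_nat_mult)
          have "real (Suc r) * (lam * (lam * x) ^ (Suc r - Suc 0)) / fact (Suc r) = lam * (lam * x) ^ r / fact r"
            unfolding f by (subst mult_divide_mult_cancel_left) auto
          then show ?thesis by (simp add: power_mult_distrib)
        qed
        from d show ?thesis unfolding e .
      qed
    qed (use True in auto)
    then show ?thesis using True by simp
  next
    case False
    then show ?thesis by (auto intro!: nn_integral_zero' simp: indicator_def)
  qed
  finally show ?thesis .
qed



context pp begin

definition Cs :: "'a \<Rightarrow> nat set" where "Cs \<omega> = {k. S k \<omega> \<le> L - eps \<and> eps < T (Suc k) \<omega>}"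

lemma AE_pos: "AE \<omega> in M. \<forall>i. 0 < T i \<omega>"
proof (subst AE_all_countable, intro allI)
  fix i
  have "\<P>(x in M. 0 < T i x) = exp (- 0 * lam)"
    by (rule exponential_distributedD_gt[OF dist]) (use lam in auto)
  then have "emeasure M {x\<in>space M. 0 < T i x} = 1"
    by (simp add: emeasure_eq_measure)
  then show "AE \<omega> in M. 0 < T i \<omega>"
    by (rule AE_I_eq_1) measurable
qed

definition EV :: "nat \<Rightarrow> nat set \<Rightarrow> 'a set" where
  "EV K J = {\<omega>\<in>space M. K \<in> Cs \<omega> \<and> (\<forall>j\<in>J. j \<in> Cs \<omega>)}"

lemma EV_sets[measurable]: "finite J \<Longrightarrow> EV K J \<in> sets M"
  unfolding EV_def Cs_def by measurable

lemma emeasure_EV: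
  assumes J: "J \<subseteq> {..<K}"
  shows "emeasure M (EV K J) = ennreal (exp (-lam*eps)) ^ Suc (card J) * ennreal (erlang_CDF K lam (L - eps - eps * card J))"
proof -
  have fJ: "finite J" using J finite_subset by blast
  have "emeasure M (EV K J) = emeasure M {\<omega>\<in>space M. S K \<omega> \<le> L - eps \<and> eps < T (Suc K) \<omega> \<and> (\<forall>j\<in>J. eps < T (Suc j) \<omega>)}"
  proof (rule emeasure_eq_AE)
    show "AE \<omega> in M. (\<omega> \<in> EV K J) = (\<omega> \<in> {\<omega>\<in>space M. S K \<omega> \<le> L - eps \<and> eps < T (Suc K) \<omega> \<and> (\<forall>j\<in>J. eps < T (Suc j) \<omega>)})"
      using AE_pos
    proof eventually_elim
      case (elim \<omega>)
      have mono: "S j \<omega> \<le> S K \<omega>" if "j \<in> J" for j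
      proof -
        have "j \<le> K" using that J by auto
        then show ?thesis unfolding S_def using elim
          by (intro sum_mono2) (auto simp: less_imp_le)
      qed
      show ?case unfolding EV_def Cs_def using mono by (auto intro: order_trans)
    qed
    show "EV K J \<in> sets M" using fJ by measurable
    show "{\<omega>\<in>space M. S K \<omega> \<le> L - eps \<and> eps < T (Suc K) \<omega> \<and> (\<forall>j\<in>J. eps < T (Suc j) \<omega>)} \<in> sets M"
      using fJ by measurable
  qed
  also have "\<dots> = ennreal (exp (-lam*eps)) ^ Suc (card J) * ennreal (erlang_CDF K lam (L - eps - eps * card J))"
    by (rule P_event[OF J])
  finally show ?thesis .
qed

definition Sub :: "nat \<Rightarrow> nat \<Rightarrow> nat set set" where "Sub K r = {J. J \<subseteq> {..<K} \<and> card J = r}"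

lemma finite_Sub: "finite (Sub K r)"
  unfolding Sub_def by (rule finite_subset[of _ "Pow {..<K}"]) auto

lemma card_Sub: "card (Sub K r) = K choose r"
  unfolding Sub_def using n_subsets[of "{..<K}" r] by simp

lemma pointwise_choose:
  "indicator (Cs \<omega>) K * of_nat (card (Cs \<omega> \<inter> {..<K}) choose r) = (\<Sum>J\<in>Sub K r. indicator (EV K J) \<omega> :: ennreal)"
  if \<omega>: "\<omega> \<in> space M" for \<omega>
proof -
  have fin: "finite (Cs \<omega> \<inter> {..<K})" by simp
  have "card (Cs \<omega> \<inter> {..<K}) choose r = card {J. J \<subseteq> Cs \<omega> \<inter> {..<K} \<and> card J = r}"
    using n_subsets[OF fin] by simp
  also have "{J. J \<subseteq> Cs \<omega> \<inter> {..<K} \<and> card J = r} = {J\<in>Sub K r. \<forall>j\<in>J. j \<in> Cs \<omega>}"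
    unfolding Sub_def by auto
  also have "card \<dots> = (\<Sum>J\<in>Sub K r. if \<forall>j\<in>J. j \<in> Cs \<omega> then 1 else 0)"
    using finite_Sub by (simp add: sum.If_cases Int_def)
  finally have c: "card (Cs \<omega> \<inter> {..<K}) choose r = (\<Sum>J\<in>Sub K r. if \<forall>j\<in>J. j \<in> Cs \<omega> then 1 else 0)" .
  show ?thesis
  proof (cases "K \<in> Cs \<omega>")
    case True
    then show ?thesis unfolding c using \<omega> by (simp add: EV_def indicator_def of_nat_sum of_bool_def if_distrib cong: if_cong)
  next
    case False
    then show ?thesis using \<omega> by (simp add: EV_def indicator_def)
  qed
qed

definition Mom :: "nat \<Rightarrow> ennreal" where
  "Mom r = (\<integral>\<^sup>+\<omega>. (\<Sum>K. indicator (Cs \<omega>) K * of_nat (card (Cs \<omega> \<inter> {..<K}) choose r)) \<partial>M)"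

lemma Mom_eq:
  "Mom r = ennreal (exp (-lam*eps)) ^ Suc r *
     ennreal (if L - eps - eps * r \<ge> 0 then (lam * (L - eps - eps * r)) ^ Suc r / fact (Suc r) else 0)"
proof -
  have "Mom r = (\<integral>\<^sup>+\<omega>. (\<Sum>K. \<Sum>J\<in>Sub K r. indicator (EV K J) \<omega>) \<partial>M)"
    unfolding Mom_def by (intro nn_integral_cong suminf_cong pointwise_choose)
  also have "\<dots> = (\<Sum>K. \<integral>\<^sup>+\<omega>. (\<Sum>J\<in>Sub K r. indicator (EV K J) \<omega>) \<partial>M)"
  proof (rule nn_integral_suminf)
    fix K
    have "\<And>J. J \<in> Sub K r \<Longrightarrow> finite J" unfolding Sub_def using finite_subset by blast
    then show "(\<lambda>\<omega>. \<Sum>J\<in>Sub K r. indicator (EV K J) \<omega> :: ennreal) \<in> borel_measurable M"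
      by (intro borel_measurable_sum borel_measurable_indicator EV_sets) 
  qed
  also have "\<dots> = (\<Sum>K. \<Sum>J\<in>Sub K r. emeasure M (EV K J))"
  proof (intro suminf_cong)
    fix K
    have "\<And>J. J \<in> Sub K r \<Longrightarrow> finite J" unfolding Sub_def using finite_subset by blast
    then show "(\<integral>\<^sup>+\<omega>. (\<Sum>J\<in>Sub K r. indicator (EV K J) \<omega>) \<partial>M) = (\<Sum>J\<in>Sub K r. emeasure M (EV K J))"
      by (subst nn_integral_sum) auto
  qed
  also have "\<dots> = (\<Sum>K. ennreal (exp (-lam*eps)) ^ Suc r * (of_nat (K choose r) * ennreal (erlang_CDF K lam (L - eps - eps * r))))"
  proof (intro suminf_cong)
    fix K
    have "(\<Sum>J\<in>Sub K r. emeasure M (EV K J)) = (\<Sum>J\<in>Sub K r. ennreal (exp (-lam*eps)) ^ Suc r * ennreal (erlang_CDF K lam (L - eps - eps * r)))"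
      by (intro sum.cong refl) (auto simp: Sub_def emeasure_EV)
    also have "\<dots> = ennreal (exp (-lam*eps)) ^ Suc r * (of_nat (K choose r) * ennreal (erlang_CDF K lam (L - eps - eps * r)))"
      by (simp add: card_Sub mult_ac)
    finally show "(\<Sum>J\<in>Sub K r. emeasure M (EV K J)) = \<dots>" .
  qed
  also have "\<dots> = ennreal (exp (-lam*eps)) ^ Suc r * (\<Sum>K. of_nat (K choose r) * ennreal (erlang_CDF K lam (L - eps - eps * r)))"
    by (rule ennreal_suminf_cmult)
  also have "\<dots> = ennreal (exp (-lam*eps)) ^ Suc r *
     ennreal (if L - eps - eps * r \<ge> 0 then (lam * (L - eps - eps * r)) ^ Suc r / fact (Suc r) else 0)"
    by (simp only: erlang_choose_sum[OF lam])
  finally show ?thesis .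
qed

end


lemma suminf_indicator_fin:
  assumes "(\<Sum>K. indicator C K :: ennreal) \<noteq> \<infinity>"
  shows "finite (C :: nat set)"
proof (rule ccontr)
  assume inf: "infinite C"
  have "(\<Sum>K. indicator C K :: ennreal) = (\<integral>\<^sup>+K. indicator C K \<partial>count_space UNIV)"
    by (simp add: nn_integral_count_space_nat)
  also have "\<dots> = emeasure (count_space UNIV) C" by (rule nn_integral_indicator) simp
  also have "\<dots> = \<infinity>" using inf by simp
  finally show False using assms by simp
qed

lemma suminf_indicator_card:
  assumes "finite (C :: nat set)"
  shows "(\<Sum>K. indicator C K :: ennreal) = of_nat (card C)"
proof -
  have "(\<Sum>K. indicator C K :: ennreal) = (\<Sum>K\<in>C. indicator C K)"
    using assms by (intro suminf_finite) auto
  also have "\<dots> = of_nat (card C)" by simp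
  finally show ?thesis .
qed

lemma bij_rank:
  assumes "finite (C :: nat set)"
  shows "bij_betw (\<lambda>K. card (C \<inter> {..<K})) C {..<card C}"
proof -
  have inj: "inj_on (\<lambda>K. card (C \<inter> {..<K})) C"
  proof (rule linorder_inj_onI)
    fix K1 K2 assume "K1 < K2" "K1 \<in> C" "K2 \<in> C"
    then have "C \<inter> {..<K1} \<subset> C \<inter> {..<K2}" by auto
    then have "card (C \<inter> {..<K1}) < card (C \<inter> {..<K2})"
      by (intro psubset_card_mono) auto
    then show "card (C \<inter> {..<K1}) \<noteq> card (C \<inter> {..<K2})" by simp
  qed auto
  have sub: "(\<lambda>K. card (C \<inter> {..<K})) ` C \<subseteq> {..<card C}"
  proof
    fix x assume "x \<in> (\<lambda>K. card (C \<inter> {..<K})) ` C"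
    then obtain K where K: "K \<in> C" "x = card (C \<inter> {..<K})" by auto
    have "C \<inter> {..<K} \<subset> C" using K by auto
    then have "card (C \<inter> {..<K}) < card C" using assms by (intro psubset_card_mono) auto
    then show "x \<in> {..<card C}" using K by simp
  qed
  have "(\<lambda>K. card (C \<inter> {..<K})) ` C = {..<card C}"
    using sub by (intro card_subset_eq) (auto simp: card_image[OF inj])
  then show ?thesis using inj unfolding bij_betw_def by simp
qed

lemma sum_rank_choose:
  assumes "finite (C :: nat set)"
  shows "(\<Sum>K\<in>C. card (C \<inter> {..<K}) choose r) = card C choose Suc r"
proof -
  have "(\<Sum>K\<in>C. card (C \<inter> {..<K}) choose r) = (\<Sum>i<card C. i choose r)"
    using sum.reindex_bij_betw[OF bij_rank[OF assms], of "\<lambda>i. i choose r"] by simp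
  also have "\<dots> = card C choose Suc r"
  proof (cases "card C")
    case 0 then show ?thesis by simp
  next
    case (Suc n)
    then show ?thesis using sum_choose_upper[where n=n and m=r] by (simp add: lessThan_Suc_atMost)
  qed
  finally show ?thesis .
qed

lemma choose_suminf:
  assumes "finite (C :: nat set)"
  shows "(\<Sum>K. indicator C K * of_nat (card (C \<inter> {..<K}) choose r) :: ennreal) = of_nat (card C choose Suc r)"
proof -
  have "(\<Sum>K. indicator C K * of_nat (card (C \<inter> {..<K}) choose r) :: ennreal) = (\<Sum>K\<in>C. indicator C K * of_nat (card (C \<inter> {..<K}) choose r))"
    using assms by (intro suminf_finite) auto
  also have "\<dots> = (\<Sum>K\<in>C. of_nat (card (C \<inter> {..<K}) choose r))"
    by (intro sum.cong) auto
  also have "\<dots> = of_nat (\<Sum>K\<in>C. card (C \<inter> {..<K}) choose r)" by simp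
  also have "\<dots> = of_nat (card C choose Suc r)" using sum_rank_choose[OF assms] by simp
  finally show ?thesis .
qed

lemma inversion:
  fixes k n B :: nat
  assumes "k \<le> B"
  shows "(if k = n then 1 else 0 :: real) = (\<Sum>m\<in>{n..B}. (-1) ^ (m - n) * real (m choose n) * real (k choose m))"
proof (cases "n \<le> k")
  case False
  then have "\<And>m. m \<in> {n..B} \<Longrightarrow> k choose m = 0" by auto
  then show ?thesis using False by (auto intro!: sum.neutral)
next
  case True
  have "(\<Sum>m\<in>{n..B}. (-1) ^ (m - n) * real (m choose n) * real (k choose m))
      = (\<Sum>m\<in>{n..k}. (-1) ^ (m - n) * real (m choose n) * real (k choose m))"
    using assms True by (intro sum.mono_neutral_right) auto
  also have "\<dots> = (\<Sum>m\<in>{n..k}. real (k choose n) * ((-1) ^ (m - n) * real ((k - n) choose (m - n))))"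
  proof (intro sum.cong refl)
    fix m assume m: "m \<in> {n..k}"
    have "(k choose m) * (m choose n) = (k choose n) * ((k - n) choose (m - n))"
      using m choose_mult[of n m k] by auto
    then have "real (k choose m) * real (m choose n) = real (k choose n) * real ((k - n) choose (m - n))"
      by (metis of_nat_mult)
    then show "(-1) ^ (m - n) * real (m choose n) * real (k choose m) = real (k choose n) * ((-1) ^ (m - n) * real ((k - n) choose (m - n)))"
      by (simp add: algebra_simps)
  qed
  also have "\<dots> = real (k choose n) * (\<Sum>m\<in>{n..k}. (-1) ^ (m - n) * real ((k - n) choose (m - n)))"
    by (simp add: sum_distrib_left)
  also have "(\<Sum>m\<in>{n..k}. (-1) ^ (m - n) * real ((k - n) choose (m - n))) = (\<Sum>i\<le>k - n. (-1) ^ i * real ((k - n) choose i))"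
  proof -
    have "(\<Sum>i\<le>k - n. (-1) ^ i * real ((k - n) choose i)) = (\<Sum>m\<in>(\<lambda>i. i + n) ` {..k - n}. (-1) ^ (m - n) * real ((k - n) choose (m - n)))"
      by (subst sum.reindex) (auto simp: inj_on_def)
    also have "(\<lambda>i. i + n) ` {..k - n} = {n..k}"
    proof (rule set_eqI)
      fix x show "x \<in> (\<lambda>i. i + n) ` {..k - n} \<longleftrightarrow> x \<in> {n..k}"
      proof
        assume "x \<in> {n..k}"
        then have "x - n \<in> {..k - n}" "x = (x - n) + n" by auto
        then show "x \<in> (\<lambda>i. i + n) ` {..k - n}" by blast
      qed (use True in auto)
    qed
    finally show ?thesis by simp
  qed
  also have "real (k choose n) * (\<Sum>i\<le>k - n. (-1) ^ i * real ((k - n) choose i)) = (if k = n then 1 else 0)"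
  proof (cases "k = n")
    case True then show ?thesis by simp
  next
    case False
    then have "k - n > 0" using \<open>n \<le> k\<close> by simp
    then show ?thesis using choose_alternating_sum[of "k - n"] False by simp
  qed
  finally show ?thesis ..
qed



context pp begin

definition N :: "'a \<Rightarrow> nat" where "N \<omega> = card (Cs \<omega>)"
definition Gs :: "'a \<Rightarrow> ennreal" where "Gs \<omega> = (\<Sum>K. indicator (Cs \<omega>) K)"

lemma Gs_meas[measurable]: "Gs \<in> borel_measurable M"
proof -
  have e: "Gs \<omega> = (\<Sum>K. (if S K \<omega> \<le> L - eps \<and> eps < T (Suc K) \<omega> then 1 else 0 :: ennreal))" for \<omega>
    unfolding Gs_def by (intro suminf_cong) (auto simp: Cs_def indicator_def)
  have "(\<lambda>\<omega>. \<Sum>K. (if S K \<omega> \<le> L - eps \<and> eps < T (Suc K) \<omega> then 1 else 0 :: ennreal)) \<in> borel_measurable M"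
    by measurable
  then show ?thesis by (subst measurable_cong[OF e]) auto
qed

lemma Gs_eq: "Gs \<omega> = (if finite (Cs \<omega>) then of_nat (card (Cs \<omega>)) else \<infinity>)"
  using suminf_indicator_fin[of "Cs \<omega>"] suminf_indicator_card[of "Cs \<omega>"] unfolding Gs_def by auto

lemma AE_fin: "AE \<omega> in M. finite (Cs \<omega>)"
proof -
  have "Mom 0 = (\<integral>\<^sup>+\<omega>. Gs \<omega> \<partial>M)" unfolding Mom_def Gs_def by simp
  moreover have "Mom 0 \<noteq> \<infinity>" unfolding Mom_eq by (simp add: ennreal_power ennreal_mult_eq_top_iff)
  ultimately have "AE \<omega> in M. Gs \<omega> \<noteq> \<infinity>" by (intro nn_integral_PInf_AE) auto
  then show ?thesis by eventually_elim (auto simp: Gs_eq split: if_splits)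
qed

lemma N_meas[measurable]: "N \<in> measurable M (count_space UNIV)"
proof (subst measurable_count_space_eq2_countable, intro conjI ballI)
  show "N \<in> space M \<rightarrow> UNIV" by simp
  fix n :: nat
  have "N -` {n} \<inter> space M = (Gs -` {of_nat n} \<inter> space M) \<union> (if n = 0 then Gs -` {\<infinity>} \<inter> space M else {})"
    by (auto simp: N_def Gs_eq card_gt_0_iff split: if_splits)
  also have "\<dots> \<in> sets M" by (intro sets.Un) (auto intro: measurable_sets[OF Gs_meas])
  finally show "N -` {n} \<inter> space M \<in> sets M" .
qed

lemma MomC: "(\<integral>\<^sup>+\<omega>. of_nat (N \<omega> choose Suc r) \<partial>M) = Mom r"
  unfolding Mom_def N_def
  by (intro nn_integral_cong_AE, use AE_fin in eventually_elim) (simp add: choose_suminf)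

definition B :: nat where "B = nat \<lfloor>L / eps\<rfloor>"

lemma B_props: "real B * eps \<le> L" "L < (real B + 1) * eps"
proof -
  have fl: "0 \<le> \<lfloor>L / eps\<rfloor>" using Lpos eps by simp
  then have rB: "real B = of_int \<lfloor>L / eps\<rfloor>" unfolding B_def by simp
  have "of_int \<lfloor>L / eps\<rfloor> \<le> L / eps" by (rule of_int_floor_le)
  then show "real B * eps \<le> L" unfolding rB using pos_le_divide_eq[OF eps] by blast
  have "L / eps < of_int \<lfloor>L / eps\<rfloor> + 1" by (rule real_of_int_floor_add_one_gt)
  then show "L < (real B + 1) * eps" unfolding rB using pos_divide_less_eq[OF eps] by blast
qed

lemma N_le: "AE \<omega> in M. N \<omega> \<le> B"
proof -
  have neg: "\<not> (L - eps - eps * real B \<ge> 0)" using B_props(2) by (simp add: algebra_simps)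
  have "(\<integral>\<^sup>+\<omega>. of_nat (N \<omega> choose Suc B) \<partial>M) = 0"
    unfolding MomC Mom_eq using neg by simp
  moreover have "(\<lambda>\<omega>. of_nat (N \<omega> choose Suc B) :: ennreal) \<in> borel_measurable M"
    using measurable_compose[OF N_meas, of "\<lambda>k. of_nat (k choose Suc B) :: ennreal" borel] by simp
  ultimately have "AE \<omega> in M. (of_nat (N \<omega> choose Suc B) :: ennreal) = 0"
    by (simp add: nn_integral_0_iff_AE)
  then show ?thesis by eventually_elim (simp add: binomial_eq_0_iff)
qed

definition v :: "nat \<Rightarrow> real" where "v m = (exp (-lam*eps) * lam * (L - real m * eps)) ^ m / fact m"

lemma v_nonneg: "m \<le> B \<Longrightarrow> 0 \<le> v m"
proof -
  assume mB: "m \<le> B"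
  have "real m * eps \<le> real B * eps" using mB eps by (intro mult_right_mono) auto
  then have "real m * eps \<le> L" using B_props(1) by linarith
  then show "0 \<le> v m" unfolding v_def using lam by simp
qed

lemma meas_choose: "(\<lambda>\<omega>. real (N \<omega> choose m)) \<in> borel_measurable M"
  using measurable_compose[OF N_meas, of "\<lambda>k. real (k choose m)" borel] by simp

lemma nn_choose: "m \<le> B \<Longrightarrow> (\<integral>\<^sup>+\<omega>. ennreal (real (N \<omega> choose m)) \<partial>M) = ennreal (v m)"
proof (cases m)
  case 0
  then show ?thesis by (simp add: v_def emeasure_space_1)
next
  case (Suc r)
  assume mB: "m \<le> B"
  have pos: "0 \<le> L - eps - eps * real r"
  proof -
    have "real m * eps \<le> real B * eps" using mB eps by (intro mult_right_mono) auto
    then have "real m * eps \<le> L" using B_props(1) by linarith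
    then show ?thesis using Suc by (simp add: algebra_simps)
  qed
  have "(\<integral>\<^sup>+\<omega>. ennreal (real (N \<omega> choose m)) \<partial>M) = Mom r"
    unfolding MomC[symmetric] Suc by (simp add: ennreal_of_nat_eq_real_of_nat)
  also have "\<dots> = ennreal (exp (-lam*eps) ^ Suc r * ((lam * (L - eps - eps * r)) ^ Suc r / fact (Suc r)))"
  proof -
    have Y: "0 \<le> (lam * (L - eps - eps * r)) ^ Suc r / fact (Suc r)" using pos lam by simp
    have "Mom r = ennreal (exp (-lam*eps)) ^ Suc r * ennreal ((lam * (L - eps - eps * r)) ^ Suc r / fact (Suc r))"
      by (simp only: Mom_eq if_P[OF pos])
    also have "\<dots> = ennreal (exp (-lam*eps) ^ Suc r * ((lam * (L - eps - eps * r)) ^ Suc r / fact (Suc r)))"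
      using Y by (metis ennreal_mult ennreal_power exp_ge_zero zero_le_power)
    finally show ?thesis .
  qed
  also have "exp (-lam*eps) ^ Suc r * ((lam * (L - eps - eps * r)) ^ Suc r / fact (Suc r)) = v m"
  proof -
    have e1: "L - real (Suc r) * eps = L - eps - eps * real r" by (simp add: algebra_simps)
    show ?thesis unfolding v_def Suc e1 by (simp only: power_mult_distrib mult.assoc times_divide_eq_right)
  qed
  finally show ?thesis .
qed

lemma int_choose: assumes "m \<le> B"
  shows "integrable M (\<lambda>\<omega>. real (N \<omega> choose m))" "(\<integral>\<omega>. real (N \<omega> choose m) \<partial>M) = v m"
proof -
  show "integrable M (\<lambda>\<omega>. real (N \<omega> choose m))"
    using nn_choose[OF assms] by (intro integrableI_bounded meas_choose) simp
  have "(\<integral>\<omega>. real (N \<omega> choose m) \<partial>M) = enn2real (\<integral>\<^sup>+\<omega>. ennreal (real (N \<omega> choose m)) \<partial>M)"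
    by (intro integral_eq_nn_integral meas_choose) auto
  also have "\<dots> = v m" using nn_choose[OF assms] v_nonneg[OF assms] by simp
  finally show "(\<integral>\<omega>. real (N \<omega> choose m) \<partial>M) = v m" .
qed

lemma prob_N: "measure M {\<omega>\<in>space M. N \<omega> = n} = (\<Sum>m\<in>{n..B}. (-1) ^ (m - n) * real (m choose n) * v m)"
proof -
  have sN: "{\<omega>\<in>space M. N \<omega> = n} \<in> sets M" by measurable
  have "measure M {\<omega>\<in>space M. N \<omega> = n} = (\<integral>\<omega>. indicator {\<omega>\<in>space M. N \<omega> = n} \<omega> \<partial>M)"
    using sN by simp
  also have "\<dots> = (\<integral>\<omega>. (\<Sum>m\<in>{n..B}. (-1) ^ (m - n) * real (m choose n) * real (N \<omega> choose m)) \<partial>M)"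
  proof (rule integral_cong_AE)
    show "(\<lambda>\<omega>. indicator {\<omega>\<in>space M. N \<omega> = n} \<omega> :: real) \<in> borel_measurable M" using sN by measurable
    show "(\<lambda>\<omega>. \<Sum>m\<in>{n..B}. (-1) ^ (m - n) * real (m choose n) * real (N \<omega> choose m)) \<in> borel_measurable M"
      using meas_choose by measurable
    show "AE \<omega> in M. indicator {\<omega>\<in>space M. N \<omega> = n} \<omega> = (\<Sum>m\<in>{n..B}. (-1) ^ (m - n) * real (m choose n) * real (N \<omega> choose m))"
      using N_le AE_space
    proof eventually_elim
      case (elim \<omega>)
      then show ?case using inversion[OF elim(1), of n] by (auto simp: indicator_def)
    qed
  qed
  also have "\<dots> = (\<Sum>m\<in>{n..B}. (\<integral>\<omega>. (-1) ^ (m - n) * real (m choose n) * real (N \<omega> choose m) \<partial>M))"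
    by (rule Bochner_Integration.integral_sum) (auto intro!: integrable_mult_right int_choose)
  also have "\<dots> = (\<Sum>m\<in>{n..B}. (-1) ^ (m - n) * real (m choose n) * v m)"
    by (intro sum.cong refl) (auto simp: int_choose)
  finally show ?thesis .
qed

end


lemma term_eq:
  fixes n i :: nat and e lam c :: real
  shows "(-1) ^ (n + i - n) * real ((n + i) choose n) * ((e * lam * c) ^ (n + i) / fact (n + i))
    = 1 / fact n * ((-1) ^ i / fact i * ((c * lam * e) ^ (n + i)))"
proof -
  have b: "real ((n + i) choose n) = fact (n + i) / (fact n * fact i)"
    using binomial_fact[of n "n + i"] by simp
  have "fact (n + i) \<noteq> (0::real)" by simp
  then show ?thesis unfolding b by (simp add: field_simps mult_ac)
qed

context pp begin

lemma set_eq: "{\<omega> \<in> space M. beta0 eps (poisson_points T \<omega>) L = n} = {\<omega>\<in>space M. N \<omega> = n}"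
proof -
  have "beta0 eps (poisson_points T \<omega>) L = N \<omega>" for \<omega>
  proof -
    let ?X = "poisson_points T \<omega>"
    have "beta0 eps ?X L = card {k. eps < ?X (Suc k) - ?X k \<and> ?X k + eps \<le> L}"
      unfolding beta0_def by (rule card_clusters)
    also have "{k. eps < ?X (Suc k) - ?X k \<and> ?X k + eps \<le> L} = Cs \<omega>"
      unfolding Cs_def S_def poisson_points_def by (auto simp: algebra_simps)
    finally show ?thesis unfolding N_def .
  qed
  then show ?thesis by simp
qed

lemma final:
  "measure M {\<omega> \<in> space M. beta0 eps (poisson_points T \<omega>) L = n}
    = 1 / fact n *
      (\<Sum>i\<in>{i::nat. n + i \<le> nat \<lfloor>L / eps\<rfloor>}.
         (-1) ^ i / fact i * ((L - real (n + i) * eps) * lam * exp (- lam * eps)) ^ (n + i))"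
proof -
  have "measure M {\<omega> \<in> space M. beta0 eps (poisson_points T \<omega>) L = n} = (\<Sum>m\<in>{n..B}. (-1) ^ (m - n) * real (m choose n) * v m)"
    unfolding set_eq by (rule prob_N)
  also have "{n..B} = (\<lambda>i. n + i) ` {i. n + i \<le> B}"
  proof (rule set_eqI)
    fix x show "x \<in> {n..B} \<longleftrightarrow> x \<in> (\<lambda>i. n + i) ` {i. n + i \<le> B}"
    proof
      assume "x \<in> {n..B}"
      then have "x - n \<in> {i. n + i \<le> B}" "x = n + (x - n)" by auto
      then show "x \<in> (\<lambda>i. n + i) ` {i. n + i \<le> B}" by blast
    qed auto
  qed
  also have "(\<Sum>m\<in>(\<lambda>i. n + i) ` {i. n + i \<le> B}. (-1) ^ (m - n) * real (m choose n) * v m)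
      = (\<Sum>i\<in>{i. n + i \<le> B}. (-1) ^ (n + i - n) * real ((n + i) choose n) * v (n + i))"
    by (subst sum.reindex) (auto simp: inj_on_def)
  also have "\<dots> = (\<Sum>i\<in>{i. n + i \<le> B}. 1 / fact n * ((-1) ^ i / fact i * ((L - real (n + i) * eps) * lam * exp (- lam * eps)) ^ (n + i)))"
    unfolding v_def by (intro sum.cong refl term_eq)
  also have "\<dots> = 1 / fact n * (\<Sum>i\<in>{i. n + i \<le> B}. (-1) ^ i / fact i * ((L - real (n + i) * eps) * lam * exp (- lam * eps)) ^ (n + i))"
    by (simp add: sum_distrib_left)
  finally show ?thesis unfolding B_def .
qed

end

theorem theorem3:
  fixes M :: "'a measure" and T :: "nat \<Rightarrow> 'a \<Rightarrow> real"
    and lam \<epsilon> L :: real and n :: nat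
  assumes "prob_space M"
    and "prob_space.indep_vars M (\<lambda>_. borel) T UNIV"
    and "\<And>i. distributed M lborel (T i) (exponential_density lam)"
    and "lam > 0" and "\<epsilon> > 0" and "L > 0"
  shows "measure M {\<omega> \<in> space M. beta0 \<epsilon> (poisson_points T \<omega>) L = n}
    = 1 / fact n *
      (\<Sum>i\<in>{i::nat. n + i \<le> nat \<lfloor>L / \<epsilon>\<rfloor>}.
         (-1) ^ i / fact i * ((L - real (n + i) * \<epsilon>) * lam * exp (- lam * \<epsilon>)) ^ (n + i))"
proof -
  interpret pp M T lam \<epsilon> L
    using assms unfolding pp_def pp_axioms_def by auto
  show ?thesis by (rule final)
qed


end
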